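(* Let $\mu$ be a finite Borel measure on $[0,1]$ such that for every $0<s<1$, $$|\widehat{\mu}(0)|^2+\sum_{u\in\mathbb{Z}\setminus\{0\}}|\widehat{\mu}(u)|^2|u|^{s-1}<\infty.$$ Let $U\ge1$ be an integer and $T(\xi)=\sum_{|u|\le U}c_ue(-\xi u)$ with $c_u\in\mathbb{C}$. Then for every $\rho\in(0,1)$, $$\Big|\int_0^1T(\xi)\,d\mu(\xi)\Big|\ll_{\rho,\mu}U^\rho\|T\|_{L^2([0,1])}.$$
   Context: $e(x)=e^{2\pi i x}$ and $\widehat{\mu}(\xi)=\int_0^1e(-\xi\alpha)\,d\mu(\alpha)$. The implied constant depends only on $\rho$ and $\mu$. *)

theory Defs
  imports "HOL-Analysis.Analysis"
begin

definition e :: "real \<Rightarrow> complex" where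
  "e x = cis (2 * pi * x)"

definition fourier_coeff :: "real measure \<Rightarrow> real \<Rightarrow> complex" where
  "fourier_coeff M \<xi> = integral\<^sup>L M (\<lambda>\<alpha>. e (- \<xi> * \<alpha>))"

definition trig_poly :: "nat \<Rightarrow> (int \<Rightarrow> complex) \<Rightarrow> real \<Rightarrow> complex" where
  "trig_poly U c \<xi> = (\<Sum>u\<in>{-int U..int U}. c u * e (- \<xi> * of_int u))"

definition L2_norm01 :: "(real \<Rightarrow> complex) \<Rightarrow> real" where
  "L2_norm01 f = sqrt (LINT \<xi>:{0..1}|lborel. (cmod (f \<xi>))^2)"

end

theory Submission imports Defs begin

lemma e_add: "e (a + b) = e a * e b"
  unfolding e_def by (simp add: distrib_left cis_mult)

lemma cnj_e: "cnj (e a) = e (- a)"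
  unfolding e_def by (simp add: cis_cnj)

lemma e_int: "e (of_int k) = 1"
  unfolding e_def by (metis cis_multiple_2pi mult.commute mult.assoc Ints_of_int)

lemma e_deriv: "((\<lambda>x. e (x * k)) has_vector_derivative (2 * pi * k * \<i> * e (x * k))) (at x within A)"
proof -
  have "((\<lambda>x. cis (2 * pi * (x * k))) has_derivative (\<lambda>t. (2*pi*(t*k)) *\<^sub>R (\<i> * cis (2 * pi * (x*k))))) (at x within A)"
    by (intro derivative_eq_intros) auto
  then show ?thesis unfolding e_def has_vector_derivative_def
    by (simp add: scaleR_conv_of_real algebra_simps)
qed

lemma orth: "((\<lambda>x. e (x * of_int k)) has_integral (if k = 0 then 1 else 0)) {0..1::real}"
proof (cases "k = 0")
  case True
  then show ?thesis unfolding e_def using has_integral_const_real[of "1::complex" 0 1] by simp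
next
  case False
  define F where "F x = e (x * of_int k) / (2 * pi * of_int k * \<i>)" for x
  have "((\<lambda>x. e (x * of_int k)) has_integral (F 1 - F 0)) {0..1::real}"
  proof (rule fundamental_theorem_of_calculus)
    fix x :: real
    have "(F has_vector_derivative (2 * pi * of_int k * \<i> * e (x * of_int k)) / (2 * pi * of_int k * \<i>)) (at x within {0..1})"
      unfolding F_def by (intro has_vector_derivative_divide e_deriv)
    then show "(F has_vector_derivative e (x * of_int k)) (at x within {0..1})"
      using False by simp
  qed simp
  moreover have "F 1 - F 0 = 0" unfolding F_def using e_int[of k] e_int[of 0] by simp
  ultimately show ?thesis using False by simp
qed

lemma cont_trig: "continuous_on A (trig_poly U c)"
  unfolding trig_poly_def e_def by (intro continuous_intros)

lemma parseval: "(LINT \<xi>:{0..1}|lborel. (cmod (trig_poly U c \<xi>))^2) = (\<Sum>u\<in>{-int U..int U}. (cmod (c u))^2)"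
proof -
  let ?A = "{-int U..int U}"
  have si: "set_integrable lborel {0..1} (\<lambda>\<xi>. (cmod (trig_poly U c \<xi>))^2)"
    by (intro borel_integrable_atLeastAtMost' continuous_intros cont_trig)
  have eq: "complex_of_real ((cmod (trig_poly U c \<xi>))^2) =
      (\<Sum>u\<in>?A. \<Sum>v\<in>?A. (c u * cnj (c v)) * e (\<xi> * of_int (v - u)))" for \<xi>
  proof -
    have "complex_of_real ((cmod (trig_poly U c \<xi>))^2) = trig_poly U c \<xi> * cnj (trig_poly U c \<xi>)"
      by (rule complex_norm_square)
    also have "\<dots> = (\<Sum>u\<in>?A. c u * e (- \<xi> * of_int u)) * (\<Sum>v\<in>?A. cnj (c v) * e (\<xi> * of_int v))"
      unfolding trig_poly_def by (simp add: cnj_e)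
    also have "\<dots> = (\<Sum>u\<in>?A. \<Sum>v\<in>?A. (c u * e (- \<xi> * of_int u)) * (cnj (c v) * e (\<xi> * of_int v)))"
      by (rule sum_product)
    also have "\<dots> = (\<Sum>u\<in>?A. \<Sum>v\<in>?A. (c u * cnj (c v)) * e (\<xi> * of_int (v - u)))"
    proof (intro sum.cong refl)
      fix u v
      have "e (\<xi> * of_int (v - u)) = e (- \<xi> * of_int u) * e (\<xi> * of_int v)"
        by (simp add: e_add[symmetric] algebra_simps)
      then show "(c u * e (- \<xi> * of_int u)) * (cnj (c v) * e (\<xi> * of_int v)) = (c u * cnj (c v)) * e (\<xi> * of_int (v - u))"
        by simp
    qed
    finally show ?thesis .
  qed
  have "((\<lambda>\<xi>. \<Sum>u\<in>?A. \<Sum>v\<in>?A. (c u * cnj (c v)) * e (\<xi> * of_int (v - u))) has_integral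
          (\<Sum>u\<in>?A. \<Sum>v\<in>?A. (c u * cnj (c v)) * (if v - u = 0 then 1 else 0))) {0..1}"
    by (intro has_integral_sum finite_atLeastAtMost_int has_integral_mult_right orth)
  moreover have "(\<Sum>u\<in>?A. \<Sum>v\<in>?A. (c u * cnj (c v)) * (if v - u = 0 then 1 else 0)) = (\<Sum>u\<in>?A. complex_of_real ((cmod (c u))^2))"
  proof (intro sum.cong refl)
    fix u assume "u \<in> ?A"
    then have "(\<Sum>v\<in>?A. (c u * cnj (c v)) * (if v - u = 0 then 1 else 0)) = (\<Sum>v\<in>?A. if v = u then c u * cnj (c v) else 0)"
      by (intro sum.cong) auto
    also have "\<dots> = c u * cnj (c u)" using \<open>u \<in> ?A\<close> by (simp add: sum.delta)
    finally show "(\<Sum>v\<in>?A. (c u * cnj (c v)) * (if v - u = 0 then 1 else 0)) = complex_of_real ((cmod (c u))^2)"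
      by (metis complex_norm_square)
  qed
  ultimately have "((\<lambda>\<xi>. complex_of_real ((cmod (trig_poly U c \<xi>))^2)) has_integral
      complex_of_real (\<Sum>u\<in>?A. (cmod (c u))^2)) {0..1}"
    unfolding eq by simp
  then have "((Re \<circ> (\<lambda>\<xi>. complex_of_real ((cmod (trig_poly U c \<xi>))^2))) has_integral
      Re (complex_of_real (\<Sum>u\<in>?A. (cmod (c u))^2))) {0..1}"
    by (intro has_integral_linear bounded_linear_Re)
  then have "((\<lambda>\<xi>. (cmod (trig_poly U c \<xi>))^2) has_integral (\<Sum>u\<in>?A. (cmod (c u))^2)) {0..1}"
    by (simp add: o_def)
  then show ?thesis using set_borel_integral_eq_integral(2)[OF si] by (simp add: integral_unique)
qed

lemma int_trig:
  assumes borel: "sets M = sets borel" and fin: "finite_measure M"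
  shows "integral\<^sup>L M (trig_poly U c) = (\<Sum>u\<in>{-int U..int U}. c u * fourier_coeff M (of_int u))"
proof -
  have meas: "(\<lambda>\<xi>. c u * e (- \<xi> * of_int u)) \<in> borel_measurable M" for u
  proof -
    have "(\<lambda>\<xi>. c u * e (- \<xi> * of_int u)) \<in> borel_measurable borel"
      unfolding e_def by (intro borel_measurable_continuous_onI continuous_intros)
    then show ?thesis using measurable_cong_sets[OF borel refl] by blast
  qed
  have int: "integrable M (\<lambda>\<xi>. c u * e (- \<xi> * of_int u))" for u
    by (rule finite_measure.integrable_const_bound[OF fin, where B="cmod (c u)"])
       (use meas in \<open>auto simp: e_def norm_mult\<close>)
  have "integral\<^sup>L M (trig_poly U c) = (\<Sum>u\<in>{-int U..int U}. integral\<^sup>L M (\<lambda>\<xi>. c u * e (- \<xi> * of_int u)))"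
    unfolding trig_poly_def by (rule Bochner_Integration.integral_sum) (use int in auto)
  also have "\<dots> = (\<Sum>u\<in>{-int U..int U}. c u * fourier_coeff M (of_int u))"
    unfolding fourier_coeff_def by (simp add: mult.commute)
  finally show ?thesis .
qed

theorem lemma4p1:
  fixes M :: "real measure"
  assumes borel: "sets M = sets borel"
    and fin: "finite_measure M"
    and supp: "emeasure M (- {0..1}) = 0"
    and energy: "\<And>s::real. 0 < s \<Longrightarrow> s < 1 \<Longrightarrow>
        (\<lambda>u::int. (cmod (fourier_coeff M (of_int u)))^2 * \<bar>real_of_int u\<bar> powr (s - 1))
          summable_on (UNIV - {0})"
  shows "\<forall>\<rho>::real. 0 < \<rho> \<and> \<rho> < 1 \<longrightarrow>
    (\<exists>C::real. \<forall>(U::nat) (c::int \<Rightarrow> complex). U \<ge> 1 \<longrightarrow>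
       cmod (integral\<^sup>L M (trig_poly U c)) \<le> C * real U powr \<rho> * L2_norm01 (trig_poly U c))"
proof (intro allI impI)
  fix \<rho> :: real
  assume r: "0 < \<rho> \<and> \<rho> < 1"
  define s where "s = 1 - \<rho>"
  have s: "0 < s" "s < 1" using r by (auto simp: s_def)
  define m where "m u = cmod (fourier_coeff M (of_int u))" for u :: int
  define g where "g u = (m u)^2 * \<bar>real_of_int u\<bar> powr (s - 1)" for u :: int
  define S where "S = infsum g (UNIV - {0})"
  define K where "K = (m 0)^2 + S"
  have gsum: "g summable_on (UNIV - {0})" using energy[OF s] unfolding g_def m_def .
  have gnn: "g u \<ge> 0" for u unfolding g_def by simp
  show "\<exists>C::real. \<forall>(U::nat) (c::int \<Rightarrow> complex). U \<ge> 1 \<longrightarrow>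
       cmod (integral\<^sup>L M (trig_poly U c)) \<le> C * real U powr \<rho> * L2_norm01 (trig_poly U c)"
  proof (intro exI[of _ "sqrt K"] allI impI)
    fix U :: nat and c :: "int \<Rightarrow> complex"
    assume U: "U \<ge> 1"
    let ?A = "{-int U..int U}"
    have fin_sub: "(\<Sum>u\<in>?A - {0}. g u) \<le> S"
    proof -
      have "(\<Sum>u\<in>?A - {0}. g u) = infsum g (?A - {0})" by simp
      also have "\<dots> \<le> S" unfolding S_def
        by (rule infsum_mono_neutral) (use gsum gnn in auto)
      finally show ?thesis .
    qed
    have Upos: "real U \<ge> 1" using U by simp
    have tm: "(m u)^2 \<le> real U powr (1 - s) * g u" if "u \<in> ?A - {0}" for u
    proof -
      have au: "0 < \<bar>real_of_int u\<bar>" "\<bar>real_of_int u\<bar> \<le> real U" using that by auto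
      have "real U powr (1 - s) * \<bar>real_of_int u\<bar> powr (s - 1) = (real U / \<bar>real_of_int u\<bar>) powr (1 - s)"
      proof -
        have "\<bar>real_of_int u\<bar> powr (s - 1) = inverse (\<bar>real_of_int u\<bar> powr (1 - s))"
          using powr_minus[of "\<bar>real_of_int u\<bar>" "1 - s"] by simp
        then show ?thesis using au by (subst powr_divide) (auto simp: divide_inverse)
      qed
      also have "\<dots> \<ge> 1" using au s by (intro ge_one_powr_ge_zero) auto
      finally have "1 \<le> real U powr (1 - s) * \<bar>real_of_int u\<bar> powr (s - 1)" .
      then have "(m u)^2 * 1 \<le> (m u)^2 * (real U powr (1 - s) * \<bar>real_of_int u\<bar> powr (s - 1))"
        by (intro mult_left_mono) auto
      then show ?thesis unfolding g_def by (simp add: algebra_simps)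
    qed
    have Srest: "(\<Sum>u\<in>?A - {0}. (m u)^2) \<le> real U powr (1 - s) * S"
    proof -
      have "(\<Sum>u\<in>?A - {0}. (m u)^2) \<le> (\<Sum>u\<in>?A - {0}. real U powr (1 - s) * g u)"
        by (rule sum_mono) (rule tm)
      also have "\<dots> = real U powr (1 - s) * (\<Sum>u\<in>?A - {0}. g u)" by (simp add: sum_distrib_left)
      also have "\<dots> \<le> real U powr (1 - s) * S" by (intro mult_left_mono fin_sub) auto
      finally show ?thesis .
    qed
    have P1: "real U powr (1 - s) \<ge> 1" using Upos s by (intro ge_one_powr_ge_zero) auto
    have P2: "real U powr (1 - s) \<le> (real U powr \<rho>)^2"
    proof -
      have "real U powr (1 - s) \<le> real U powr (2 * \<rho>)" using Upos r by (intro powr_mono) (auto simp: s_def)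
      also have "\<dots> = (real U powr \<rho>)^2" by (simp add: power2_eq_square powr_add[symmetric])
      finally show ?thesis .
    qed
    have S0: "S \<ge> 0" unfolding S_def by (intro infsum_nonneg) (use gnn in auto)
    have msum: "(\<Sum>u\<in>?A. (m u)^2) \<le> (real U powr \<rho>)^2 * K"
    proof -
      have "(\<Sum>u\<in>?A. (m u)^2) = (m 0)^2 + (\<Sum>u\<in>?A - {0}. (m u)^2)"
        by (subst sum.remove[of _ 0]) auto
      also have "\<dots> \<le> (m 0)^2 + real U powr (1 - s) * S" using Srest by simp
      also have "\<dots> \<le> real U powr (1 - s) * K" unfolding K_def
        using P1 by (simp add: algebra_simps) (metis mult_left_mono zero_le_power2 mult.right_neutral mult.commute)
      also have "\<dots> \<le> (real U powr \<rho>)^2 * K" using P2 S0 unfolding K_def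
        by (intro mult_right_mono) auto
      finally show ?thesis .
    qed
    have K0: "K \<ge> 0" using S0 unfolding K_def by simp
    have L2m: "L2_set m ?A \<le> real U powr \<rho> * sqrt K"
    proof -
      have "L2_set m ?A = sqrt (\<Sum>u\<in>?A. (m u)^2)" unfolding L2_set_def ..
      also have "\<dots> \<le> sqrt ((real U powr \<rho>)^2 * K)" using msum by (rule real_sqrt_le_mono)
      also have "\<dots> = real U powr \<rho> * sqrt K" by (simp add: real_sqrt_mult)
      finally show ?thesis .
    qed
    have L2c: "L2_norm01 (trig_poly U c) = L2_set (\<lambda>u. cmod (c u)) ?A"
      unfolding L2_norm01_def L2_set_def parseval ..
    have "cmod (integral\<^sup>L M (trig_poly U c)) = cmod (\<Sum>u\<in>?A. c u * fourier_coeff M (of_int u))"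
      using int_trig[OF borel fin] by simp
    also have "\<dots> \<le> (\<Sum>u\<in>?A. \<bar>cmod (c u)\<bar> * \<bar>m u\<bar>)"
      by (rule order_trans[OF norm_sum]) (simp add: m_def norm_mult)
    also have "\<dots> \<le> L2_set (\<lambda>u. cmod (c u)) ?A * L2_set m ?A" by (rule L2_set_mult_ineq)
    also have "\<dots> \<le> L2_set (\<lambda>u. cmod (c u)) ?A * (real U powr \<rho> * sqrt K)"
      by (intro mult_left_mono L2m L2_set_nonneg)
    also have "\<dots> = sqrt K * real U powr \<rho> * L2_norm01 (trig_poly U c)"
      unfolding L2c by (simp add: algebra_simps)
    finally show "cmod (integral\<^sup>L M (trig_poly U c)) \<le> sqrt K * real U powr \<rho> * L2_norm01 (trig_poly U c)" .
  qed
qed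
end
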